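(* For a cograph $\mathcal{C}$ the following are equivalent: (1) $\mathcal{C}$ is a PL-cograph; (2) for every edge value $e$ and every two distinct pairs $\{P,Q\}\neq\{R,S\}$ with $\mathcal{C}(P,Q)=\mathcal{C}(R,S)=e$, every pair of distinct points of the (3- or 4-element) set $\{P,Q,R,S\}$ has edge value $e$; (3) every block of $\mathcal{C}$ is a complete graph; (4) any two distinct blocks of $\mathcal{C}$ have at most one vertex in common.
   Context: A cograph is a function $\mathcal{C}$ assigning to each unordered pair $\{P,Q\}$ of distinct elements of a point set a value $\mathcal{C}(P,Q)$ (an edge). A PL-cograph is a cograph satisfying: (1a) for distinct points $P,Q,R$, if $\mathcal{C}(P,Q)=\mathcal{C}(Q,R)$ then $\mathcal{C}(P,Q)=\mathcal{C}(P,R)$; (1b) for distinct points $P,Q,R,S$, if $\mathcal{C}(P,Q)=\mathcal{C}(R,S)$ then $\mathcal{C}(P,Q)=\mathcal{C}(P,R)=\mathcal{C}(P,S)=\mathcal{C}(Q,R)=\mathcal{C}(Q,S)$. For an edge value $e$, the block of $e$ is the graph whose vertices are all points lying in some pair with value $e$ and whose edges are exactly the pairs with value $e$; it is complete if every two of its vertices form a pair with value $e$. *)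

theory Defs
  imports Main
begin

text \<open>A cograph on the point set V: a value C P Q for every pair of distinct points,
  depending only on the unordered pair (modelled as a symmetric function on V;
  its values on the diagonal are irrelevant).\<close>
definition cograph :: "'a set \<Rightarrow> ('a \<Rightarrow> 'a \<Rightarrow> 'b) \<Rightarrow> bool" where
  "cograph V C \<longleftrightarrow> (\<forall>P\<in>V. \<forall>Q\<in>V. P \<noteq> Q \<longrightarrow> C P Q = C Q P)"

definition PL_cograph :: "'a set \<Rightarrow> ('a \<Rightarrow> 'a \<Rightarrow> 'b) \<Rightarrow> bool" where
  "PL_cograph V C \<longleftrightarrow> cograph V C \<and>
     (\<forall>P\<in>V. \<forall>Q\<in>V. \<forall>R\<in>V. distinct [P, Q, R] \<longrightarrow> C P Q = C Q R \<longrightarrow> C P Q = C P R) \<and>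
     (\<forall>P\<in>V. \<forall>Q\<in>V. \<forall>R\<in>V. \<forall>S\<in>V. distinct [P, Q, R, S] \<longrightarrow> C P Q = C R S \<longrightarrow>
        C P Q = C P R \<and> C P Q = C P S \<and> C P Q = C Q R \<and> C P Q = C Q S)"

definition edge_values :: "'a set \<Rightarrow> ('a \<Rightarrow> 'a \<Rightarrow> 'b) \<Rightarrow> 'b set" where
  "edge_values V C = {C P Q | P Q. P \<in> V \<and> Q \<in> V \<and> P \<noteq> Q}"

definition block_verts :: "'a set \<Rightarrow> ('a \<Rightarrow> 'a \<Rightarrow> 'b) \<Rightarrow> 'b \<Rightarrow> 'a set" where
  "block_verts V C e = {P \<in> V. \<exists>Q\<in>V. Q \<noteq> P \<and> C P Q = e}"

definition block_edges :: "'a set \<Rightarrow> ('a \<Rightarrow> 'a \<Rightarrow> 'b) \<Rightarrow> 'b \<Rightarrow> 'a set set" where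
  "block_edges V C e = {{P, Q} | P Q. P \<in> V \<and> Q \<in> V \<and> P \<noteq> Q \<and> C P Q = e}"

definition block :: "'a set \<Rightarrow> ('a \<Rightarrow> 'a \<Rightarrow> 'b) \<Rightarrow> 'b \<Rightarrow> 'a set \<times> 'a set set" where
  "block V C e = (block_verts V C e, block_edges V C e)"

definition complete_block :: "'a set \<Rightarrow> ('a \<Rightarrow> 'a \<Rightarrow> 'b) \<Rightarrow> 'b \<Rightarrow> bool" where
  "complete_block V C e \<longleftrightarrow>
     (\<forall>P\<in>block_verts V C e. \<forall>Q\<in>block_verts V C e. P \<noteq> Q \<longrightarrow> {P, Q} \<in> block_edges V C e)"

end

theory Submission
  imports Defs
begin

lemma edge_mem:
  assumes "cograph V C" "P \<in> V" "Q \<in> V" "P \<noteq> Q"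
  shows "{P, Q} \<in> block_edges V C e \<longleftrightarrow> C P Q = e"
proof
  assume "{P, Q} \<in> block_edges V C e"
  then obtain A B where "{P,Q} = {A,B}" "A \<in> V" "B \<in> V" "A \<noteq> B" "C A B = e"
    unfolding block_edges_def by blast
  then show "C P Q = e" using assms unfolding cograph_def doubleton_eq_iff by metis
next
  assume "C P Q = e" then show "{P, Q} \<in> block_edges V C e"
    using assms unfolding block_edges_def by blast
qed

lemma complete_iff:
  assumes "cograph V C"
  shows "complete_block V C e \<longleftrightarrow>
    (\<forall>P\<in>block_verts V C e. \<forall>Q\<in>block_verts V C e. P \<noteq> Q \<longrightarrow> C P Q = e)"
proof -
  have "\<And>P. P \<in> block_verts V C e \<Longrightarrow> P \<in> V" unfolding block_verts_def by blast
  then show ?thesis unfolding complete_block_def using edge_mem[OF assms] by meson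
qed

lemma bv1: "P \<in> V \<Longrightarrow> Q \<in> V \<Longrightarrow> P \<noteq> Q \<Longrightarrow> P \<in> block_verts V C (C P Q)"
  unfolding block_verts_def by auto
lemma bv2: "cograph V C \<Longrightarrow> P \<in> V \<Longrightarrow> Q \<in> V \<Longrightarrow> P \<noteq> Q \<Longrightarrow> Q \<in> block_verts V C (C P Q)"
proof -
  assume "cograph V C" "P \<in> V" "Q \<in> V" "P \<noteq> Q"
  then have "C Q P = C P Q" unfolding cograph_def by auto
  then show ?thesis using bv1[of Q V P C] \<open>P \<in> V\<close> \<open>Q \<in> V\<close> \<open>P \<noteq> Q\<close> by simp
qed

theorem proposition5p1:
  fixes V :: "'a set" and C :: "'a \<Rightarrow> 'a \<Rightarrow> 'b"
  assumes "cograph V C"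
  defines "c1 \<equiv> PL_cograph V C"
    and "c2 \<equiv> (\<forall>e\<in>edge_values V C. \<forall>P\<in>V. \<forall>Q\<in>V. \<forall>R\<in>V. \<forall>S\<in>V.
               P \<noteq> Q \<longrightarrow> R \<noteq> S \<longrightarrow> {P, Q} \<noteq> {R, S} \<longrightarrow> C P Q = e \<longrightarrow> C R S = e \<longrightarrow>
               (\<forall>X\<in>{P, Q, R, S}. \<forall>Y\<in>{P, Q, R, S}. X \<noteq> Y \<longrightarrow> C X Y = e))"
    and "c3 \<equiv> (\<forall>e\<in>edge_values V C. complete_block V C e)"
    and "c4 \<equiv> (\<forall>e\<in>edge_values V C. \<forall>f\<in>edge_values V C. block V C e \<noteq> block V C f \<longrightarrow>
               (\<forall>X\<in>block_verts V C e \<inter> block_verts V C f.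
                  \<forall>Y\<in>block_verts V C e \<inter> block_verts V C f. X = Y))"
  shows "(c1 \<longleftrightarrow> c2) \<and> (c1 \<longleftrightarrow> c3) \<and> (c1 \<longleftrightarrow> c4)"
proof -
  have sym: "\<And>P Q. P \<in> V \<Longrightarrow> Q \<in> V \<Longrightarrow> P \<noteq> Q \<Longrightarrow> C P Q = C Q P"
    using assms(1) unfolding cograph_def by blast
  define K where "K \<equiv> (\<forall>e. \<forall>P\<in>block_verts V C e. \<forall>Q\<in>block_verts V C e. P \<noteq> Q \<longrightarrow> C P Q = e)"
  have ev: "\<And>P Q. P \<in> V \<Longrightarrow> Q \<in> V \<Longrightarrow> P \<noteq> Q \<Longrightarrow> C P Q \<in> edge_values V C"
    unfolding edge_values_def by blast
  have c3K: "c3 \<longleftrightarrow> K"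
  proof
    assume c3
    show K unfolding K_def
    proof (intro allI ballI impI)
      fix e P Q assume P: "P \<in> block_verts V C e" and Q: "Q \<in> block_verts V C e" and "P \<noteq> Q"
      then obtain P' where "P \<in> V" "P' \<in> V" "P' \<noteq> P" "C P P' = e" unfolding block_verts_def by blast
      then have "e \<in> edge_values V C" using ev by blast
      then show "C P Q = e" using \<open>c3\<close> complete_iff[OF assms(1)] P Q \<open>P \<noteq> Q\<close> unfolding c3_def by blast
    qed
  next
    assume K then show c3 unfolding c3_def K_def using complete_iff[OF assms(1)] by blast
  qed
  have c1K: "c1 \<longleftrightarrow> K"
  proof
    assume c1
    then have a: "\<And>P Q R. P\<in>V \<Longrightarrow> Q\<in>V \<Longrightarrow> R\<in>V \<Longrightarrow> distinct [P, Q, R] \<Longrightarrow> C P Q = C Q R \<Longrightarrow> C P Q = C P R"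
      and b: "\<And>P Q R S. P\<in>V \<Longrightarrow> Q\<in>V \<Longrightarrow> R\<in>V \<Longrightarrow> S\<in>V \<Longrightarrow> distinct [P, Q, R, S] \<Longrightarrow> C P Q = C R S \<Longrightarrow>
        C P Q = C P R \<and> C P Q = C P S \<and> C P Q = C Q R \<and> C P Q = C Q S"
      unfolding c1_def PL_cograph_def by blast+
    show K unfolding K_def
    proof (intro allI ballI impI)
      fix e P Q assume P: "P \<in> block_verts V C e" and Q: "Q \<in> block_verts V C e" and "P \<noteq> Q"
      obtain P' where p: "P \<in> V" "P' \<in> V" "P' \<noteq> P" "C P P' = e" using P unfolding block_verts_def by blast
      obtain Q' where q: "Q \<in> V" "Q' \<in> V" "Q' \<noteq> Q" "C Q Q' = e" using Q unfolding block_verts_def by blast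
      show "C P Q = e"
      proof (cases "P' = Q")
        case True then show ?thesis using p by simp
      next
        case F1: False
        show ?thesis
        proof (cases "Q' = P")
          case True then show ?thesis using q sym[of P Q] p \<open>P \<noteq> Q\<close> by simp
        next
          case F2: False
          show ?thesis
          proof (cases "P' = Q'")
            case True
            have "C Q P' = e" using q True by simp
            moreover have "C P' P = e" using p sym[of P P'] by simp
            ultimately have "C Q P' = C Q P" using a[of Q P' P] p q F1 F2 True \<open>P \<noteq> Q\<close> by auto
            then show ?thesis using q p True sym[of P Q] \<open>P \<noteq> Q\<close> \<open>C Q P' = e\<close> by simp
          next
            case False
            have "distinct [P, P', Q, Q']" using False p q F1 F2 \<open>P \<noteq> Q\<close> by auto
            then show ?thesis using b[of P P' Q Q'] p q by simp
          qed
        qed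
      qed
    qed
  next
    assume K
    then have Ke: "\<And>e P Q. P \<in> block_verts V C e \<Longrightarrow> Q \<in> block_verts V C e \<Longrightarrow> P \<noteq> Q \<Longrightarrow> C P Q = e"
      unfolding K_def by blast
    have a: "C P Q = C P R" if "P\<in>V" "Q\<in>V" "R\<in>V" "distinct [P, Q, R]" "C P Q = C Q R" for P Q R
    proof -
      have 1: "P \<in> block_verts V C (C P Q)" using bv1[of P V Q C] that by simp
      have "R \<in> block_verts V C (C Q R)" using bv2[OF assms(1), of Q R] that by simp
      then have 2: "R \<in> block_verts V C (C P Q)" using that(5) by simp
      have "P \<noteq> R" using that(4) by simp
      from Ke[OF 1 2 this] show ?thesis by simp
    qed
    have b: "C P Q = C P R \<and> C P Q = C P S \<and> C P Q = C Q R \<and> C P Q = C Q S"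
      if "P\<in>V" "Q\<in>V" "R\<in>V" "S\<in>V" "distinct [P, Q, R, S]" "C P Q = C R S" for P Q R S
    proof -
      have 1: "P \<in> block_verts V C (C P Q)" using bv1[of P V Q C] that by simp
      have 2: "Q \<in> block_verts V C (C P Q)" using bv2[OF assms(1), of P Q] that by simp
      have "R \<in> block_verts V C (C R S)" using bv1[of R V S C] that by simp
      then have 3: "R \<in> block_verts V C (C P Q)" using that(6) by simp
      have "S \<in> block_verts V C (C R S)" using bv2[OF assms(1), of R S] that by simp
      then have 4: "S \<in> block_verts V C (C P Q)" using that(6) by simp
      have d: "P \<noteq> R" "P \<noteq> S" "Q \<noteq> R" "Q \<noteq> S" using that(5) by auto
      show ?thesis using Ke[OF 1 3 d(1)] Ke[OF 1 4 d(2)] Ke[OF 2 3 d(3)] Ke[OF 2 4 d(4)] by simp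
    qed
    show c1 unfolding c1_def PL_cograph_def
    proof (intro conjI ballI impI)
      show "cograph V C" by (rule assms(1))
    next
      fix P Q R assume "P \<in> V" "Q \<in> V" "R \<in> V" "distinct [P, Q, R]" "C P Q = C Q R"
      then show "C P Q = C P R" by (rule a)
    next
      fix P Q R S assume h: "P \<in> V" "Q \<in> V" "R \<in> V" "S \<in> V" "distinct [P, Q, R, S]" "C P Q = C R S"
      show "C P Q = C P R" using b[OF h] by blast
      show "C P Q = C P S" using b[OF h] by blast
      show "C P Q = C Q R" using b[OF h] by blast
      show "C P Q = C Q S" using b[OF h] by blast
    qed
  qed
  have c2K: "c2 \<longleftrightarrow> K"
  proof
    assume c2
    show K unfolding K_def
    proof (intro allI ballI impI)
      fix e P Q assume P: "P \<in> block_verts V C e" and Q: "Q \<in> block_verts V C e" and "P \<noteq> Q"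
      obtain P' where p: "P \<in> V" "P' \<in> V" "P' \<noteq> P" "C P P' = e" using P unfolding block_verts_def by blast
      obtain Q' where q: "Q \<in> V" "Q' \<in> V" "Q' \<noteq> Q" "C Q Q' = e" using Q unfolding block_verts_def by blast
      have e: "e \<in> edge_values V C" using ev p by blast
      show "C P Q = e"
      proof (cases "{P, P'} = {Q, Q'}")
        case True then have "P' = Q" using \<open>P \<noteq> Q\<close> by (auto simp: doubleton_eq_iff)
        then show ?thesis using p by simp
      next
        case False
        then show ?thesis using \<open>c2\<close> e p q \<open>P \<noteq> Q\<close> unfolding c2_def
          by (metis insertI1 insertI2)
      qed
    qed
  next
    assume K
    show c2 unfolding c2_def
    proof (intro ballI impI)
      fix e P Q R S X Y assume "P \<in> V" "Q \<in> V" "R \<in> V" "S \<in> V" "P \<noteq> Q" "R \<noteq> S"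
        "C P Q = e" "C R S = e" "X \<in> {P,Q,R,S}" "Y \<in> {P,Q,R,S}" "X \<noteq> Y"
      moreover have "P \<in> block_verts V C e" "Q \<in> block_verts V C e"
        "R \<in> block_verts V C e" "S \<in> block_verts V C e"
        using bv1[of P V Q C] bv2[OF assms(1), of P Q] bv1[of R V S C] bv2[OF assms(1), of R S] calculation by auto
      ultimately show "C X Y = e" using \<open>K\<close> unfolding K_def by blast
    qed
  qed
  have c4K: "c4 \<longleftrightarrow> K"
  proof
    assume c4
    show K unfolding K_def
    proof (intro allI ballI impI)
      fix e P Q assume P: "P \<in> block_verts V C e" and Q: "Q \<in> block_verts V C e" and "P \<noteq> Q"
      obtain P' where p: "P \<in> V" "P' \<in> V" "P' \<noteq> P" "C P P' = e" using P unfolding block_verts_def by blast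
      have q: "Q \<in> V" using Q unfolding block_verts_def by blast
      have e: "e \<in> edge_values V C" using ev p by blast
      have f: "C P Q \<in> edge_values V C" using ev p q \<open>P \<noteq> Q\<close> by blast
      show "C P Q = e"
      proof (rule ccontr)
        assume ne: "C P Q \<noteq> e"
        have pp: "P \<noteq> P'" using p by simp
        have "{P, P'} \<in> block_edges V C e" using edge_mem[OF assms(1) p(1) p(2) pp, of e] p by simp
        moreover have "{P, P'} \<notin> block_edges V C (C P Q)" using edge_mem[OF assms(1) p(1) p(2) pp, of "C P Q"] p ne by simp
        ultimately have "block V C e \<noteq> block V C (C P Q)" unfolding block_def by auto
        moreover have "P \<in> block_verts V C (C P Q)" "Q \<in> block_verts V C (C P Q)"
          using bv1[of P V Q C] bv2[OF assms(1), of P Q] p q \<open>P \<noteq> Q\<close> by auto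
        ultimately show False using \<open>c4\<close> e f P Q \<open>P \<noteq> Q\<close> unfolding c4_def by (meson IntI)
      qed
    qed
  next
    assume K
    show c4 unfolding c4_def
    proof (intro ballI impI)
      fix e f X Y assume "e \<in> edge_values V C" "f \<in> edge_values V C" and ne: "block V C e \<noteq> block V C f"
        and X: "X \<in> block_verts V C e \<inter> block_verts V C f" and Y: "Y \<in> block_verts V C e \<inter> block_verts V C f"
      have "e \<noteq> f" using ne by auto
      show "X = Y"
      proof (rule ccontr)
        assume "X \<noteq> Y"
        then have "C X Y = e" "C X Y = f" using \<open>K\<close> X Y unfolding K_def by blast+
        then show False using \<open>e \<noteq> f\<close> by simp
      qed
    qed
  qed
  show ?thesis using c1K c2K c3K c4K by blast
qed

end
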